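(* For the system $$u_{0,0}-v_{1,1}=0,\qquad (u_{1,0}-u_{0,0})(v_{1,0}-u_{0,0})-(u_{0,1}-u_{0,0})(v_{0,1}-u_{0,0})=0,$$ the following second order flow is a symmetry: $$\frac{\partial u_{0,0}}{\partial t_2}=\frac{u_{0,0}-v_{1,0}}{(u_{-1,0}-v_{1,0})^2}\left(\frac{u_{0,0}-u_{-1,0}}{v_{2,0}-u_{0,0}}+\frac{u_{-1,0}-v_{0,0}}{v_{0,0}-u_{-2,0}}+1\right),$$ $$\frac{\partial v_{0,0}}{\partial t_2}=\frac{u_{-1,0}-v_{0,0}}{(u_{-1,0}-v_{1,0})^2}\left(\frac{u_{0,0}-v_{1,0}}{v_{2,0}-u_{0,0}}+\frac{v_{1,0}-v_{0,0}}{v_{0,0}-u_{-2,0}}+1\right).$$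
   Context: Unknowns $u,v$ on $\mathbb Z^2$, $u_{i,j}=u(n+i,m+j)$, similarly $v$. Shifts $\mathcal S:n\mapsto n+1$, $\mathcal T:m\mapsto m+1$. For a quad system $\boldsymbol Q(\boldsymbol u_{0,0},\boldsymbol u_{1,0},\boldsymbol u_{0,1},\boldsymbol u_{1,1})=\boldsymbol 0$ with $\boldsymbol u=(u,v)$ and Jacobians $\mathrm Q_{(p,q)}=\partial\boldsymbol Q/\partial\boldsymbol u_{p,q}$, a vector function $\boldsymbol F=(F^{(1)},F^{(2)})$ of finitely many shifts of $\boldsymbol u$ is a symmetry, written $\partial_t u_{0,0}=F^{(1)}$, $\partial_t v_{0,0}=F^{(2)}$, if $\mathrm Q_{(0,0)}\boldsymbol F+\mathrm Q_{(1,0)}\mathcal S(\boldsymbol F)+\mathrm Q_{(0,1)}\mathcal T(\boldsymbol F)+\mathrm Q_{(1,1)}\mathcal S\mathcal T(\boldsymbol F)=\boldsymbol 0$ holds on all solutions of the system. *)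

theory Defs
  imports "HOL-Analysis.Analysis"
begin

type_synonym lattice_fun = "int \<Rightarrow> int \<Rightarrow> real"

type_synonym quad_args = "(real \<times> real) \<times> (real \<times> real) \<times> (real \<times> real) \<times> (real \<times> real)"

definition quad_point :: "lattice_fun \<Rightarrow> lattice_fun \<Rightarrow> int \<Rightarrow> int \<Rightarrow> quad_args" where
  "quad_point u v n m =
     ((u n m, v n m), (u (n+1) m, v (n+1) m), (u n (m+1), v n (m+1)), (u (n+1) (m+1), v (n+1) (m+1)))"

definition is_solution :: "(quad_args \<Rightarrow> real \<times> real) \<Rightarrow> lattice_fun \<Rightarrow> lattice_fun \<Rightarrow> bool" where
  "is_solution Q u v \<longleftrightarrow> (\<forall>n m. Q (quad_point u v n m) = (0, 0))"

text \<open>Linearised equation at (n,m):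
  Q_(0,0) F + Q_(1,0) S(F) + Q_(0,1) T(F) + Q_(1,1) ST(F) = 0, i.e. the derivative
  (Jacobian) of Q at the quad point applied to (F, S F, T F, S T F) vanishes.\<close>
definition linearized_eq ::
  "(quad_args \<Rightarrow> real \<times> real) \<Rightarrow> (lattice_fun \<Rightarrow> lattice_fun \<Rightarrow> int \<Rightarrow> int \<Rightarrow> real \<times> real)
     \<Rightarrow> lattice_fun \<Rightarrow> lattice_fun \<Rightarrow> int \<Rightarrow> int \<Rightarrow> bool" where
  "linearized_eq Q F u v n m \<longleftrightarrow>
     (\<exists>Q'. (Q has_derivative Q') (at (quad_point u v n m)) \<and>
       Q' (F u v n m, F u v (n+1) m, F u v n (m+1), F u v (n+1) (m+1)) = (0, 0))"

definition Qsys :: "quad_args \<Rightarrow> real \<times> real" where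
  "Qsys = (\<lambda>((u00, v00), (u10, v10), (u01, v01), (u11, v11)).
     (u00 - v11, (u10 - u00) * (v10 - u00) - (u01 - u00) * (v01 - u00)))"

text \<open>The second order flow (u_{i,0} = u (n+i) m etc.).\<close>
definition flow2 :: "lattice_fun \<Rightarrow> lattice_fun \<Rightarrow> int \<Rightarrow> int \<Rightarrow> real \<times> real" where
  "flow2 u v n m =
    (let u0 = u n m; um1 = u (n-1) m; um2 = u (n-2) m;
         v0 = v n m; v1 = v (n+1) m; v2 = v (n+2) m
     in ((u0 - v1) / (um1 - v1)^2 * ((u0 - um1) / (v2 - u0) + (um1 - v0) / (v0 - um2) + 1),
         (um1 - v0) / (um1 - v1)^2 * ((u0 - v1) / (v2 - u0) + (v1 - v0) / (v0 - um2) + 1)))"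

definition flow2_defined :: "lattice_fun \<Rightarrow> lattice_fun \<Rightarrow> int \<Rightarrow> int \<Rightarrow> bool" where
  "flow2_defined u v n m \<longleftrightarrow>
     u (n-1) m \<noteq> v (n+1) m \<and> v (n+2) m \<noteq> u n m \<and> v n m \<noteq> u (n-2) m"

end

theory Submission
  imports Defs
begin
definition f1 :: "real\<Rightarrow>real\<Rightarrow>real\<Rightarrow>real\<Rightarrow>real\<Rightarrow>real\<Rightarrow>real" where
 "f1 u0 um1 um2 v0 v1 v2 = (u0 - v1) / (um1 - v1)^2 * ((u0 - um1) / (v2 - u0) + (um1 - v0) / (v0 - um2) + 1)"
definition f2 :: "real\<Rightarrow>real\<Rightarrow>real\<Rightarrow>real\<Rightarrow>real\<Rightarrow>real\<Rightarrow>real" where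
 "f2 u0 um1 um2 v0 v1 v2 = (um1 - v0) / (um1 - v1)^2 * ((u0 - v1) / (v2 - u0) + (v1 - v0) / (v0 - um2) + 1)"

lemma A0_form:
  assumes "b1\<noteq>a2" "a3\<noteq>b2" "a1\<noteq>b0"
  shows "f1 b2 b1 b0 a1 a2 a3 = -(a2-b2)/(a2-b1)^2 * ((b2-b1)/(a3-b2) + (b1-b0)/(a1-b0))"
proof -
  have e: "(b1 - a1) / (a1 - b0) + 1 = (b1-b0)/(a1-b0)" using assms by (simp add: field_simps)
  have s: "(b2-a2)/(b1-a2)^2 = -(a2-b2)/(a2-b1)^2" by (simp add: power2_commute)
  have "f1 b2 b1 b0 a1 a2 a3 = (b2-a2)/(b1-a2)^2 * ((b2-b1)/(a3-b2) + ((b1 - a1)/(a1-b0) + 1))"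
    unfolding f1_def by (simp only: add.assoc)
  then show ?thesis unfolding e s .
qed

lemma rel_forms:
  fixes a b bm bp c :: real
  assumes R: "(bp-b)*(a-b) = (c-b)*(bm-b)" and g: "bm \<noteq> b"
  shows "c - b = -(bp-b)*(a-b)/(b-bm)" "c - bp = -(bp-b)*(a-bm)/(b-bm)"
    "bp - c = (bp-b)*(a-bm)/(b-bm)"
proof -
  have g': "b - bm \<noteq> 0" "bm - b \<noteq> 0" using g by auto
  show 1: "c - b = -(bp-b)*(a-b)/(b-bm)" using R g' by (simp add: field_simps; simp add: algebra_simps)
  show 2: "c - bp = -(bp-b)*(a-bm)/(b-bm)" using 1 g' by (simp add: field_simps; simp add: algebra_simps)
  show "bp - c = (bp-b)*(a-bm)/(b-bm)" using 1 g' by (simp add: field_simps; simp add: algebra_simps)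
qed

lemma aux_p: fixes X p q D :: real
  shows "X\<noteq>0 \<Longrightarrow> q\<noteq>0 \<Longrightarrow> D\<noteq>0 \<Longrightarrow> (-X*p/D)/(-X*q/D)^2 = -p*D/(X*q^2)"
  by (simp add: field_simps power2_eq_square)

lemma aux_t: fixes X p q D :: real
  shows "X\<noteq>0 \<Longrightarrow> D\<noteq>0 \<Longrightarrow> (-X*p/D)/(X*q/D) = -p/q"
  by (simp add: field_simps)

lemma aux_t2: fixes X Y q D :: real
  shows "D\<noteq>0 \<Longrightarrow> Y/(X*q/D) = Y*D/(X*q)"
  by (simp add: field_simps)

lemma aux_f: fixes X p q D Y :: real
  shows "X\<noteq>0 \<Longrightarrow> D\<noteq>0 \<Longrightarrow> -p*D/(X*q^2) * (X/D * Y) = -p/q^2 * Y"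
  by (simp add: field_simps)

lemma goal1_generic:
  fixes a1 a2 a3 b0 b1 b2 b3 b4 c1 c2 c3 :: real
  assumes R1: "(b2-b1)*(a1-b1) = (c1-b1)*(b0-b1)" and R2: "(b3-b2)*(a2-b2)=(c2-b2)*(b1-b2)"
   and R3: "(b4-b3)*(a3-b3)=(c3-b3)*(b2-b3)"
  and nz: "b1\<noteq>a2" "a3\<noteq>b2" "a1\<noteq>b0" "b4\<noteq>c3" "b2\<noteq>c1" "b3\<noteq>c2"
  and g: "b0 \<noteq> b1" "b1 \<noteq> b2" "b2 \<noteq> b3"
  shows "f1 b2 b1 b0 a1 a2 a3 = f2 c3 c2 c1 b2 b3 b4"
proof -
  note r1 = rel_forms[OF R1 g(1)] and r2 = rel_forms[OF R2 g(2)] and r3 = rel_forms[OF R3 g(3)]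
  have b43: "b4 - b3 \<noteq> 0" using r3(3) nz by auto
  have nzs: "b1-a2\<noteq>0" "a2-b1\<noteq>0" "a3-b2\<noteq>0" "b2-a3\<noteq>0" "a1-b0\<noteq>0" "b0-a1\<noteq>0"
    "b0-b1\<noteq>0" "b1-b0\<noteq>0" "b2-b1\<noteq>0" "b1-b2\<noteq>0" "b3-b2\<noteq>0" "b2-b3\<noteq>0"
    using nz g by auto
  have p: "(c2-b2)/(c2-b3)^2 = -(a2-b2)*(b2-b1)/((b3-b2)*(a2-b1)^2)"
    unfolding r2 using nzs by (intro aux_p) auto
  have t1: "(c3-b3)/(b4-c3) = -(a3-b3)/(a3-b2)"
    unfolding r3 using nzs b43 by (intro aux_t) auto
  have t2: "(b3-b2)/(b2-c1) = (b3-b2)*(b1-b0)/((b2-b1)*(a1-b0))"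
    unfolding r1 using nzs by (intro aux_t2) auto
  have "f2 c3 c2 c1 b2 b3 b4 = -(a2-b2)*(b2-b1)/((b3-b2)*(a2-b1)^2) * (-(a3-b3)/(a3-b2) + (b3-b2)*(b1-b0)/((b2-b1)*(a1-b0)) + 1)"
    unfolding f2_def p t1 t2 ..
  also have "-(a3-b3)/(a3-b2) + (b3-b2)*(b1-b0)/((b2-b1)*(a1-b0)) + 1 = (b3-b2)/(b2-b1) * ((b2-b1)/(a3-b2) + (b1-b0)/(a1-b0))"
  proof -
    have k0: "-(a3-b3)/(a3-b2) + 1 = (b3-b2)/(a3-b2)" using nzs by (simp add: field_simps)
    have k1: "-(a3-b3)/(a3-b2) + 1 = (b3-b2)/(b2-b1) * ((b2-b1)/(a3-b2))" unfolding k0 using nzs by simp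
    have k3: "(b3-b2)*(b1-b0)/((b2-b1)*(a1-b0)) = (b3-b2)/(b2-b1) * ((b1-b0)/(a1-b0))" by simp
    have "-(a3-b3)/(a3-b2) + (b3-b2)*(b1-b0)/((b2-b1)*(a1-b0)) + 1 = (-(a3-b3)/(a3-b2) + 1) + (b3-b2)*(b1-b0)/((b2-b1)*(a1-b0))" by simp
    also have "\<dots> = (b3-b2)/(b2-b1) * ((b2-b1)/(a3-b2) + (b1-b0)/(a1-b0))" unfolding k1 k3 by (simp add: distrib_left)
    finally show ?thesis .
  qed
  also have "-(a2-b2)*(b2-b1)/((b3-b2)*(a2-b1)^2) * ((b3-b2)/(b2-b1) * ((b2-b1)/(a3-b2) + (b1-b0)/(a1-b0))) = -(a2-b2)/(a2-b1)^2 * ((b2-b1)/(a3-b2) + (b1-b0)/(a1-b0))"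
    using nzs by (intro aux_f) auto
  finally show ?thesis using A0_form nz by simp
qed
lemma auxW1: fixes x1 x2 x3 x4 :: real shows "x3\<noteq>0 \<Longrightarrow> x1*(1/x3^2)*(-x2*x3/x4) = -x1*x2/(x3*x4)"
  by (simp add: field_simps power2_eq_square)
lemma auxW2: fixes x1 x2 x3 x4 :: real shows "x3\<noteq>0 \<Longrightarrow> x1*(1/x3^2)*(x2*x3/x4) = x1*x2/(x3*x4)"
  by (simp add: field_simps power2_eq_square)

lemma Bpart:
  fixes a2 a3 a4 b1 b2 b3 :: real
  assumes "a4\<noteq>b3" "a2\<noteq>b1" "a3\<noteq>b2"
  shows "f1 b3 b2 b1 a2 a3 a4 * (a2-b2) + (b3-b2) * f2 b3 b2 b1 a2 a3 a4 = -(a2-b2)*(b3-b1)/((a3-b2)*(a2-b1))"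
proof -
  have n: "a4-b3\<noteq>0" "a2-b1\<noteq>0" "a3-b2\<noteq>0" "b2-a3\<noteq>0" using assms by auto
  define W where "W = 1/(b2-a3)^2"
  have e1: "f1 b3 b2 b1 a2 a3 a4 = (b3-a3)*W*((b3-b2)/(a4-b3) + (b2-a2)/(a2-b1) + 1)" unfolding f1_def W_def by simp
  have e2: "f2 b3 b2 b1 a2 a3 a4 = (b2-a2)*W*((b3-a3)/(a4-b3) + (a3-a2)/(a2-b1) + 1)" unfolding f2_def W_def by simp
  have "f1 b3 b2 b1 a2 a3 a4 * (a2-b2) + (b3-b2) * f2 b3 b2 b1 a2 a3 a4
     = (a2-b2)*W*((b3-a3)*((b3-b2)/(a4-b3) + (b2-a2)/(a2-b1) + 1) - (b3-b2)*((b3-a3)/(a4-b3) + (a3-a2)/(a2-b1) + 1))"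
    unfolding e1 e2 by algebra
  also have "(b3-a3)*((b3-b2)/(a4-b3) + (b2-a2)/(a2-b1) + 1) - (b3-b2)*((b3-a3)/(a4-b3) + (a3-a2)/(a2-b1) + 1)
     = -(b3-b1)*(a3-b2)/(a2-b1)"
  proof -
    have i: "inverse (a2-b1) * (a2-b1) = 1" using n by simp
    show ?thesis unfolding divide_inverse using i by algebra
  qed
  also have "(a2-b2)*W*(-(b3-b1)*(a3-b2)/(a2-b1)) = -(a2-b2)*(b3-b1)/((a3-b2)*(a2-b1))"
    unfolding W_def power2_commute[of b2 a3] using n by (intro auxW1) auto
  finally show ?thesis .
qed

lemma Cpart:
  fixes b1 b2 b3 c0 c1 c2 :: real
  assumes "c1\<noteq>b2" "b3\<noteq>c2" "b1\<noteq>c0"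
  shows "(b2-b1) * f1 c2 c1 c0 b1 b2 b3 - (c2-b2) * f2 c2 c1 c0 b1 b2 b3 = (c2-b2)*(b3-b1)/((b2-c1)*(b3-c2))"
proof -
  have n: "c1-b2\<noteq>0" "b2-c1\<noteq>0" "b3-c2\<noteq>0" "b1-c0\<noteq>0" using assms by auto
  define W where "W = 1/(c1-b2)^2"
  have e1: "f1 c2 c1 c0 b1 b2 b3 = (c2-b2)*W*((c2-c1)/(b3-c2) + (c1-b1)/(b1-c0) + 1)" unfolding f1_def W_def by simp
  have e2: "f2 c2 c1 c0 b1 b2 b3 = (c1-b1)*W*((c2-b2)/(b3-c2) + (b2-b1)/(b1-c0) + 1)" unfolding f2_def W_def by simp
  have "(b2-b1) * f1 c2 c1 c0 b1 b2 b3 - (c2-b2) * f2 c2 c1 c0 b1 b2 b3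
     = (c2-b2)*W*((b2-b1)*((c2-c1)/(b3-c2) + (c1-b1)/(b1-c0) + 1) - (c1-b1)*((c2-b2)/(b3-c2) + (b2-b1)/(b1-c0) + 1))"
    unfolding e1 e2 by algebra
  also have "(b2-b1)*((c2-c1)/(b3-c2) + (c1-b1)/(b1-c0) + 1) - (c1-b1)*((c2-b2)/(b3-c2) + (b2-b1)/(b1-c0) + 1)
     = (b3-b1)*(b2-c1)/(b3-c2)"
  proof -
    have i: "inverse (b3-c2) * (b3-c2) = 1" using n by simp
    show ?thesis unfolding divide_inverse using i by algebra
  qed
  also have "(c2-b2)*W*((b3-b1)*(b2-c1)/(b3-c2)) = (c2-b2)*(b3-b1)/((b2-c1)*(b3-c2))"
    unfolding W_def power2_commute[of c1 b2] using n by (intro auxW2) auto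
  finally show ?thesis .
qed
lemma auxC: fixes x1 x2 x3 x4 x5 x6 x7 x8 :: real
  shows "x1\<noteq>0 \<Longrightarrow> x3\<noteq>0 \<Longrightarrow> x7\<noteq>0 \<Longrightarrow> (-x1*x2/x3)*x4/((x5*x6/x7)*(x1*x8/x3)) = -x2*x4*x7/(x5*x6*x8)"
  by (simp add: field_simps)

lemma goal2_generic:
  fixes a1 a2 a3 a4 b0 b1 b2 b3 c0 c1 c2 :: real
  assumes R1: "(b2-b1)*(a1-b1) = (c1-b1)*(b0-b1)" and R2: "(b3-b2)*(a2-b2)=(c2-b2)*(b1-b2)"
  and nz: "b1\<noteq>a2" "a3\<noteq>b2" "a1\<noteq>b0" "a4\<noteq>b3" "c1\<noteq>b2" "b3\<noteq>c2" "b1\<noteq>c0"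
  and g: "b0 \<noteq> b1" "b1 \<noteq> b2"
  shows "(f1 b3 b2 b1 a2 a3 a4 - f1 b2 b1 b0 a1 a2 a3)*(a2-b2) + (b3-b2)*(f2 b3 b2 b1 a2 a3 a4 - f1 b2 b1 b0 a1 a2 a3)
     - (f1 c2 c1 c0 b1 b2 b3 - f1 b2 b1 b0 a1 a2 a3)*(b1-b2) - (c2-b2)*(f2 c2 c1 c0 b1 b2 b3 - f1 b2 b1 b0 a1 a2 a3) = 0"
proof -
  note r1 = rel_forms[OF R1 g(1)] and r2 = rel_forms[OF R2 g(2)]
  have nzs: "b1-a2\<noteq>0" "a2-b1\<noteq>0" "a3-b2\<noteq>0" "b2-a3\<noteq>0" "a1-b0\<noteq>0" "b0-a1\<noteq>0"
    "b0-b1\<noteq>0" "b1-b0\<noteq>0" "b2-b1\<noteq>0" "b1-b2\<noteq>0"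
    using nz g by auto
  have b32: "b3 - b2 \<noteq> 0" using r2(3) nz by auto
  define A0 where "A0 = f1 b2 b1 b0 a1 a2 a3"
  define B0 where "B0 = f1 b3 b2 b1 a2 a3 a4"
  define B1 where "B1 = f2 b3 b2 b1 a2 a3 a4"
  define C0 where "C0 = f1 c2 c1 c0 b1 b2 b3"
  define C1 where "C1 = f2 c2 c1 c0 b1 b2 b3"
  have s1: "(B0 - A0)*(a2-b2) + (b3-b2)*(B1 - A0) - (C0 - A0)*(b1-b2) - (c2-b2)*(C1 - A0)
    = (B0*(a2-b2) + (b3-b2)*B1) + ((b2-b1)*C0 - (c2-b2)*C1) + A0*(c2 - b2 - (a2-b2) - (b3-b1))" by algebra
  have Bp: "B0*(a2-b2) + (b3-b2)*B1 = -(a2-b2)*(b3-b1)/((a3-b2)*(a2-b1))"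
    unfolding B0_def B1_def by (rule Bpart) (use nz in auto)
  have "(b2-b1)*C0 - (c2-b2)*C1 = (c2-b2)*(b3-b1)/((b2-c1)*(b3-c2))"
    unfolding C0_def C1_def by (rule Cpart) (use nz in auto)
  also have "\<dots> = -(a2-b2)*(b3-b1)*(b1-b0)/((b2-b1)*(a1-b0)*(a2-b1))"
    unfolding r1(3) r2(1) r2(3) using nzs b32 by (intro auxC) auto
  finally have Cp: "(b2-b1)*C0 - (c2-b2)*C1 = -(a2-b2)*(b3-b1)*(b1-b0)/((b2-b1)*(a1-b0)*(a2-b1))" .
  have K: "c2 - b2 - (a2-b2) - (b3-b1) = -(a2-b1)*(b3-b1)/(b2-b1)"
    unfolding r2(1) using nzs by (simp add: field_simps)
  have A: "A0 = -(a2-b2)/(a2-b1)^2 * ((b2-b1)/(a3-b2) + (b1-b0)/(a1-b0))"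
    unfolding A0_def using nz(1-3) by (rule A0_form)
  have i: "inverse (a3-b2) * (a3-b2) = 1" "inverse (a2-b1) * (a2-b1) = 1" "inverse (a1-b0) * (a1-b0) = 1" "inverse (b2-b1) * (b2-b1) = 1"
    using nzs by auto
  have "-(a2-b2)*(b3-b1)/((a3-b2)*(a2-b1)) + -(a2-b2)*(b3-b1)*(b1-b0)/((b2-b1)*(a1-b0)*(a2-b1))
    + (-(a2-b2)/(a2-b1)^2 * ((b2-b1)/(a3-b2) + (b1-b0)/(a1-b0))) * (-(a2-b1)*(b3-b1)/(b2-b1)) = 0"
    unfolding divide_inverse inverse_mult_distrib power2_eq_square using i by algebra
  then show ?thesis unfolding A0_def[symmetric] B0_def[symmetric] B1_def[symmetric] C0_def[symmetric] C1_def[symmetric] s1 Bp Cp K unfolding A .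
qed

lemma goal1_degen:
  fixes a1 a2 a3 b c1 c2 c3 :: real
  assumes "a2 \<noteq> b" "a1 \<noteq> b" "b \<noteq> c3"
  shows "f1 b b b a1 a2 a3 = f2 c3 c2 c1 b b b"
proof -
  have "(b-a1)/(a1-b) = -1" "(c3-b)/(b-c3) = -1" using assms by (simp_all add: field_simps)
  then show ?thesis unfolding f1_def f2_def by simp
qed

lemma goal2_degen:
  fixes a1 a2 a3 a4 b c0 c1 c2 :: real
  assumes "a2 \<noteq> b" "a1 \<noteq> b" "b \<noteq> c2"
  shows "(f1 b b b a2 a3 a4 - f1 b b b a1 a2 a3)*(a2-b) + (b-b)*(f2 b b b a2 a3 a4 - f1 b b b a1 a2 a3)
     - (f1 c2 c1 c0 b b b - f1 b b b a1 a2 a3)*(b-b) - (c2-b)*(f2 c2 c1 c0 b b b - f1 b b b a1 a2 a3) = 0"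
proof -
  have "(b-a1)/(a1-b) = -1" "(b-a2)/(a2-b) = -1" "(c2-b)/(b-c2) = -1" using assms by (simp_all add: field_simps)
  then show ?thesis unfolding f1_def f2_def by simp
qed

lemma flow2_f: "flow2 u v k m = (f1 (u k m) (u (k-1) m) (u (k-2) m) (v k m) (v (k+1) m) (v (k+2) m),
   f2 (u k m) (u (k-1) m) (u (k-2) m) (v k m) (v (k+1) m) (v (k+2) m))"
  unfolding flow2_def f1_def f2_def Let_def ..

definition Qd :: "quad_args \<Rightarrow> quad_args \<Rightarrow> real \<times> real" where
  "Qd p = (\<lambda>((du00, dv00), (du10, dv10), (du01, dv01), (du11, dv11)).
     case p of ((u00, v00), (u10, v10), (u01, v01), (u11, v11)) \<Rightarrow>
     (du00 - dv11, (du10-du00)*(v10-u00) + (u10-u00)*(dv10-du00) - (du01-du00)*(v01-u00) - (u01-u00)*(dv01-du00)))"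

lemma Qsys_deriv: "(Qsys has_derivative Qd p) (at p)"
proof -
  obtain u00 v00 u10 v10 u01 v01 u11 v11 where p: "p = ((u00, v00), (u10, v10), (u01, v01), (u11, v11))"
    by (metis prod.exhaust)
  have Q: "Qsys = (\<lambda>x. (fst (fst x) - snd (snd (snd (snd x))),
      (fst (fst (snd x)) - fst (fst x)) * (snd (fst (snd x)) - fst (fst x))
      - (fst (fst (snd (snd x))) - fst (fst x)) * (snd (fst (snd (snd x))) - fst (fst x))))"
    unfolding Qsys_def by (auto simp: case_prod_beta)
  have D: "Qd p = (\<lambda>x. (fst (fst x) - snd (snd (snd (snd x))),
      (fst (fst (snd x)) - fst (fst x)) * (v10 - u00) + (u10 - u00) * (snd (fst (snd x)) - fst (fst x))
      - (fst (fst (snd (snd x))) - fst (fst x)) * (v01 - u00) - (u01 - u00) * (snd (fst (snd (snd x))) - fst (fst x))))"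
    unfolding Qd_def p by (auto simp: case_prod_beta)
  show ?thesis unfolding Q D
    by (rule derivative_eq_intros refl | simp add: p)+ (auto simp: algebra_simps)
qed

theorem mainTheorem9:
  fixes u v :: lattice_fun and n m :: int
  assumes "is_solution Qsys u v"
    and "flow2_defined u v n m" and "flow2_defined u v (n+1) m"
    and "flow2_defined u v n (m+1)" and "flow2_defined u v (n+1) (m+1)"
  shows "linearized_eq Qsys flow2 u v n m"
proof -
  have sol: "u i j = v (i+1) (j+1)" "(u (i+1) j - u i j) * (v (i+1) j - u i j) = (u i (j+1) - u i j) * (v i (j+1) - u i j)" for i j
  proof -
    have h: "Qsys (quad_point u v i j) = (0,0)" using assms(1) unfolding is_solution_def by blast
    then have "u i j - v (i+1) (j+1) = 0 \<and> (u (i+1) j - u i j) * (v (i+1) j - u i j) - (u i (j+1) - u i j) * (v i (j+1) - u i j) = 0"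
      by (simp only: Qsys_def quad_point_def prod.case prod.inject)
    then show "u i j = v (i+1) (j+1)" "(u (i+1) j - u i j) * (v (i+1) j - u i j) = (u i (j+1) - u i j) * (v i (j+1) - u i j)"
      unfolding right_minus_eq by blast+
  qed
  have vm1: "v (i+1) (m+1) = u i m" for i using sol(1)[of i m] by simp
  have vm1': "v k (m+1) = u (k-1) m" for k using vm1[of "k-1"] by simp
  define a1 where "a1 = v n m"
  define a2 where "a2 = v (n+1) m"
  define a3 where "a3 = v (n+2) m"
  define a4 where "a4 = v (n+3) m"
  define b0 where "b0 = u (n-2) m"
  define b1 where "b1 = u (n-1) m"
  define b2 where "b2 = u n m"
  define b3 where "b3 = u (n+1) m"
  define b4 where "b4 = u (n+2) m"
  define c0 where "c0 = u (n-2) (m+1)"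
  define c1 where "c1 = u (n-1) (m+1)"
  define c2 where "c2 = u n (m+1)"
  define c3 where "c3 = u (n+1) (m+1)"
  have i1: "n+1-1 = n" "n+1-2 = n-1" "n+1+1 = n+2" "n+1+2 = n+3" "n-1-1 = n-2" "n+2-1 = n+1" "n+3-1 = n+2" "n+1-1-1 = n-1"
    by simp_all
  have F00: "flow2 u v n m = (f1 b2 b1 b0 a1 a2 a3, f2 b2 b1 b0 a1 a2 a3)"
    unfolding flow2_f a1_def a2_def a3_def b0_def b1_def b2_def by simp
  have F10: "flow2 u v (n+1) m = (f1 b3 b2 b1 a2 a3 a4, f2 b3 b2 b1 a2 a3 a4)"
    unfolding flow2_f a4_def a2_def a3_def b3_def b1_def b2_def i1 ..
  have F01: "flow2 u v n (m+1) = (f1 c2 c1 c0 b1 b2 b3, f2 c2 c1 c0 b1 b2 b3)"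
    unfolding flow2_f vm1' c0_def c1_def c2_def b3_def b1_def b2_def i1 by simp
  have F11: "flow2 u v (n+1) (m+1) = (f1 c3 c2 c1 b2 b3 b4, f2 c3 c2 c1 b2 b3 b4)"
    unfolding flow2_f vm1' c3_def c1_def c2_def b3_def b4_def b2_def i1 ..
  have nz: "b1\<noteq>a2" "a3\<noteq>b2" "a1\<noteq>b0" "a4\<noteq>b3" "c1\<noteq>b2" "b3\<noteq>c2" "b1\<noteq>c0" "b4\<noteq>c3" "b2\<noteq>c1"
    using assms(2-5) unfolding flow2_defined_def vm1' a1_def a2_def a3_def a4_def b0_def b1_def b2_def b3_def b4_def
      c0_def c1_def c2_def c3_def i1 by auto
  have R1: "(b2-b1)*(a1-b1) = (c1-b1)*(b0-b1)"
    using sol(2)[of "n-1" m] unfolding vm1' a1_def b0_def b1_def b2_def c1_def by (simp add: i1)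
  have R2: "(b3-b2)*(a2-b2)=(c2-b2)*(b1-b2)"
    using sol(2)[of n m] unfolding vm1' a2_def b3_def b1_def b2_def c2_def by simp
  have R3: "(b4-b3)*(a3-b3)=(c3-b3)*(b2-b3)"
    using sol(2)[of "n+1" m] unfolding vm1' a3_def b3_def b4_def b2_def c3_def i1 by (simp add: add.assoc)
  have S1: "(c1-b2)*(b1-b0) = -(b2-b1)*(a1-b0)" using R1 by algebra
  have S2: "(c2-b3)*(b2-b1) = -(b3-b2)*(a2-b1)" using R2 by algebra
  have S3: "(c3-b4)*(b3-b2) = -(b4-b3)*(a3-b2)" using R3 by algebra
  have G: "f1 b2 b1 b0 a1 a2 a3 = f2 c3 c2 c1 b2 b3 b4 \<and>
    (f1 b3 b2 b1 a2 a3 a4 - f1 b2 b1 b0 a1 a2 a3)*(a2-b2) + (b3-b2)*(f2 b3 b2 b1 a2 a3 a4 - f1 b2 b1 b0 a1 a2 a3)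
     - (f1 c2 c1 c0 b1 b2 b3 - f1 b2 b1 b0 a1 a2 a3)*(b1-b2) - (c2-b2)*(f2 c2 c1 c0 b1 b2 b3 - f1 b2 b1 b0 a1 a2 a3) = 0"
  proof (cases "b1 = b2")
    case True
    have e3: "b3 = b2" using S2 nz True by simp
    have e0: "b0 = b1" using S1 nz True by simp
    have e4: "b4 = b3" using S3 nz e3 by simp
    show ?thesis using goal1_degen[of a2 b2 a1 c3 a3 c2 c1] goal2_degen[of a2 b2 a1 c2 a3 a4 c1 c0] nz
      unfolding e4 e3 e0 True by auto
  next
    case False
    have g0: "b0 \<noteq> b1" using S1 nz False by auto
    have g3: "b2 \<noteq> b3" using S2 nz False by auto
    show ?thesis using goal1_generic[OF R1 R2 R3 nz(1-3) nz(8) nz(9) nz(6) g0 False g3]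
      goal2_generic[OF R1 R2 nz(1-7) g0 False] by simp
  qed
  have qp: "quad_point u v n m = ((b2, a1), (b3, a2), (c2, b1), (c3, b2))"
    unfolding quad_point_def vm1' a1_def a2_def b1_def b2_def b3_def c2_def c3_def by simp
  show ?thesis unfolding linearized_eq_def
  proof (intro exI conjI)
    show "(Qsys has_derivative Qd (quad_point u v n m)) (at (quad_point u v n m))" by (rule Qsys_deriv)
    show "Qd (quad_point u v n m) (flow2 u v n m, flow2 u v (n + 1) m, flow2 u v n (m + 1), flow2 u v (n + 1) (m + 1)) = (0, 0)"
      unfolding qp F00 F10 F01 F11 Qd_def
      by (simp only: prod.case prod.inject, intro conjI) (simp add: G[THEN conjunct1], rule G[THEN conjunct2])
  qed
qed

end
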